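(* For $n\ge1$, $\left|\Pi_n\wr C_2(1^11^1,1^11^2,1^12^2)\right|=\sum_{k=0}^n\binom{n}{k}\left\lfloor k/2 \right\rfloor!$.
   Context: For $n\ge0$ let $[n]=\{1,\dots,n\}$. A $2$-colored set partition of $[n]$ is a set partition of $[n]$ together with an assignment of a color from $\{1,2\}$ to each element; $\Pi_n\wr C_2$ is the set of these. For a set $S$ of patterns, $\Pi_n\wr C_2(S)$ is the set of such colored partitions avoiding every pattern in $S$ in the pattern sense. For the patterns used here: $\sigma$ contains $1^11^1$ iff two elements in the same block have the same color; $1^11^2$ iff there are $i<j$ in the same block with $i$ colored $1$ and $j$ colored $2$; $1^12^2$ iff there are $i<j$ in different blocks with $i$ colored $1$ and $j$ colored $2$. *)

theory Defs
  imports Main "HOL-Library.Disjoint_Sets" "HOL-Library.FuncSet"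
begin

text \<open>A 2-colored set partition of [n] is a pair (P, c): P a set partition of {1..n}
  and c a coloring {1..n} -> {1,2} (extensional: c is undefined outside [n]).\<close>

definition colored_partitions :: "nat \<Rightarrow> (nat set set \<times> (nat \<Rightarrow> nat)) set" where
  "colored_partitions n =
     {(P, c). partition_on {1..n} P \<and> c \<in> {1..n} \<rightarrow>\<^sub>E {1, 2}}"

definition same_block :: "nat set set \<Rightarrow> nat \<Rightarrow> nat \<Rightarrow> bool" where
  "same_block P i j \<longleftrightarrow> (\<exists>B\<in>P. i \<in> B \<and> j \<in> B)"

definition contains_1111 :: "nat \<Rightarrow> nat set set \<times> (nat \<Rightarrow> nat) \<Rightarrow> bool" where
  "contains_1111 n \<sigma> = (case \<sigma> of (P, c) \<Rightarrow>
     (\<exists>i\<in>{1..n}. \<exists>j\<in>{1..n}. i \<noteq> j \<and> same_block P i j \<and> c i = c j))"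

definition contains_1112 :: "nat \<Rightarrow> nat set set \<times> (nat \<Rightarrow> nat) \<Rightarrow> bool" where
  "contains_1112 n \<sigma> = (case \<sigma> of (P, c) \<Rightarrow>
     (\<exists>i\<in>{1..n}. \<exists>j\<in>{1..n}. i < j \<and> same_block P i j \<and> c i = 1 \<and> c j = 2))"

definition contains_1122 :: "nat \<Rightarrow> nat set set \<times> (nat \<Rightarrow> nat) \<Rightarrow> bool" where
  "contains_1122 n \<sigma> = (case \<sigma> of (P, c) \<Rightarrow>
     (\<exists>i\<in>{1..n}. \<exists>j\<in>{1..n}. i < j \<and> \<not> same_block P i j \<and> c i = 1 \<and> c j = 2))"

end

theory Submission imports Defs begin

definition g :: "nat \<Rightarrow> nat \<Rightarrow> nat" where
  "g a b = (\<Sum>r\<le>b. (a choose r) * (b choose r) * fact r)"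

lemma choose_fact_shift: "(a choose Suc r) * fact (Suc r) = a * ((a - 1) choose r) * fact r"
proof (cases a)
  case 0 then show ?thesis by simp
next
  case (Suc a')
  have e: "Suc r * (Suc a' choose Suc r) = Suc a' * (a' choose r)" by (rule Suc_times_binomial)
  have "(a choose Suc r) * fact (Suc r) = (Suc r * (Suc a' choose Suc r)) * fact r"
    using Suc by (simp only: fact_Suc of_nat_id mult.commute mult.left_commute)
  also have "\<dots> = a * ((a - 1) choose r) * fact r" using e Suc by simp
  finally show ?thesis .
qed

lemma g_rec: "g a (Suc b) = g a b + a * g (a - 1) b"
proof -
  have h: "g a b = (\<Sum>r\<le>Suc b. (a choose r) * (b choose r) * fact r)"
    unfolding g_def by (simp add: sum.atMost_Suc)
  have "g a b = 1 + (\<Sum>r\<le>b. (a choose Suc r) * (b choose Suc r) * fact (Suc r))"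
    unfolding h sum.atMost_Suc_shift by simp
  moreover have "g a (Suc b) = 1 + (\<Sum>r\<le>b. (a choose Suc r) * (b choose Suc r) * fact (Suc r))
      + (\<Sum>r\<le>b. (a choose Suc r) * (b choose r) * fact (Suc r))"
    unfolding g_def sum.atMost_Suc_shift by (simp add: algebra_simps sum.distrib)
  moreover have "(\<Sum>r\<le>b. (a choose Suc r) * (b choose r) * fact (Suc r)) = a * g (a - 1) b"
    unfolding g_def sum_distrib_left
  proof (rule sum.cong[OF refl])
    fix r show "(a choose Suc r) * (b choose r) * fact (Suc r) = a * (((a - 1) choose r) * (b choose r) * fact r)"
      using choose_fact_shift[of a r] by (metis mult.assoc mult.commute)
  qed
  ultimately show ?thesis by simp
qed

lemma V: "(\<Sum>m\<le>n. (m choose a) * ((n - m) choose b)) = Suc n choose (a + b + 1)"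
proof (induction n arbitrary: b)
  case 0
  then show ?case by (cases a; cases b; simp)
next
  case (Suc n)
  show ?case
  proof (cases b)
    case 0
    then show ?thesis using sum_choose_upper[of a "Suc n"] by simp
  next
    case (Suc b')
    have "(\<Sum>m\<le>Suc n. (m choose a) * ((Suc n - m) choose b))
        = (\<Sum>m\<le>n. (m choose a) * ((Suc n - m) choose b))"
      using Suc by (simp add: sum.atMost_Suc)
    also have "\<dots> = (\<Sum>m\<le>n. (m choose a) * ((n - m) choose b') + (m choose a) * ((n - m) choose b))"
      by (rule sum.cong[OF refl]) (simp add: Suc Suc_diff_le algebra_simps)
    also have "\<dots> = (Suc n choose (a + b' + 1)) + (Suc n choose (a + b + 1))"
      by (simp add: sum.distrib Suc.IH)
    also have "\<dots> = Suc (Suc n) choose (a + b + 1)" using Suc by simp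
    finally show ?thesis .
  qed
qed

lemma sum_pairs: "(\<Sum>k<2*(N::nat). f k) = (\<Sum>r<N. f (2*r) + f (2*r+1))"
  by (induction N) (simp_all add: sum.atMost_Suc algebra_simps)

lemma numeric: "(\<Sum>m\<le>n. g m (n - m)) = (\<Sum>k = 0..n. (n choose k) * fact (k div 2))"
proof -
  have "(\<Sum>m\<le>n. g m (n - m)) = (\<Sum>m\<le>n. \<Sum>r\<le>n. (m choose r) * ((n - m) choose r) * fact r)"
  proof (rule sum.cong[OF refl])
    fix m assume m: "m \<in> {..n}"
    show "g m (n - m) = (\<Sum>r\<le>n. (m choose r) * ((n - m) choose r) * fact r)"
      unfolding g_def by (rule sum.mono_neutral_left) auto
  qed
  also have "\<dots> = (\<Sum>r\<le>n. \<Sum>m\<le>n. (m choose r) * ((n - m) choose r) * fact r)"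
    by (rule sum.swap)
  also have "\<dots> = (\<Sum>r\<le>n. fact r * (Suc n choose (2*r+1)))"
  proof (rule sum.cong[OF refl])
    fix r
    have "(\<Sum>m\<le>n. (m choose r) * ((n - m) choose r) * fact r) = fact r * (\<Sum>m\<le>n. (m choose r) * ((n - m) choose r))"
      by (simp add: sum_distrib_left algebra_simps)
    also have "\<dots> = fact r * (Suc n choose (r + r + 1))" by (simp only: V)
    finally show "(\<Sum>m\<le>n. (m choose r) * ((n - m) choose r) * fact r) = fact r * (Suc n choose (2*r+1))"
      by (simp only: mult_2)
  qed
  also have "\<dots> = (\<Sum>r<Suc n. (n choose (2*r)) * fact ((2*r) div 2) + (n choose (2*r+1)) * fact ((2*r+1) div 2))"
    by (rule sum.cong) (auto simp: algebra_simps)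
  also have "\<dots> = (\<Sum>k<2*Suc n. (n choose k) * fact (k div 2))"
    by (rule sum_pairs[symmetric])
  also have "\<dots> = (\<Sum>k = 0..n. (n choose k) * fact (k div 2))"
    by (rule sum.mono_neutral_right) auto
  finally show ?thesis .
qed


definition XP :: "nat set \<Rightarrow> nat set \<Rightarrow> nat set set set" where
  "XP L R = {P. partition_on (L \<union> R) P \<and> (\<forall>B\<in>P. (\<exists>x. B = {x}) \<or> (\<exists>l\<in>L. \<exists>r\<in>R. B = {l, r}))}"

lemma XP_finite: "finite L \<Longrightarrow> finite R \<Longrightarrow> finite (XP L R)"
  by (rule finite_subset[OF _ finitely_many_partition_on[of "L \<union> R"]]) (auto simp: XP_def)

lemma XP_Union: "P \<in> XP L R \<Longrightarrow> \<Union>P = L \<union> R"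
  by (auto simp: XP_def partition_on_def)

lemma XP_empty: "XP L {} = {(\<lambda>x. {x}) ` L}"
proof
  show "{(\<lambda>x. {x}) ` L} \<subseteq> XP L {}"
    using partition_on_singletons[of L] by (auto simp: XP_def)
next
  show "XP L {} \<subseteq> {(\<lambda>x. {x}) ` L}"
  proof
    fix P assume P: "P \<in> XP L {}"
    then have U: "\<Union>P = L" by (auto dest: XP_Union)
    have S: "\<forall>B\<in>P. \<exists>x. B = {x}" using P by (auto simp: XP_def)
    have "P = (\<lambda>x. {x}) ` L"
    proof
      show "P \<subseteq> (\<lambda>x. {x}) ` L" using S U by blast
      show "(\<lambda>x. {x}) ` L \<subseteq> P"
      proof
        fix B assume "B \<in> (\<lambda>x. {x}) ` L"
        then obtain x where x: "x \<in> L" "B = {x}" by auto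
        then obtain C where "C \<in> P" "x \<in> C" using U by blast
        with S x show "B \<in> P" by force
      qed
    qed
    then show "P \<in> {(\<lambda>x. {x}) ` L}" by simp
  qed
qed

lemma XP_insert:
  assumes r: "r \<notin> L" "r \<notin> R" and LR: "L \<inter> R = {}"
  shows "XP L (insert r R) = insert {r} ` XP L R \<union> (\<Union>l\<in>L. insert {l, r} ` XP (L - {l}) R)"
proof
  show "XP L (insert r R) \<subseteq> insert {r} ` XP L R \<union> (\<Union>l\<in>L. insert {l, r} ` XP (L - {l}) R)"
  proof
    fix Q assume Q: "Q \<in> XP L (insert r R)"
    have pQ: "partition_on (L \<union> insert r R) Q" using Q by (auto simp: XP_def)
    have bQ: "\<forall>B\<in>Q. (\<exists>x. B = {x}) \<or> (\<exists>l\<in>L. \<exists>r\<in>insert r R. B = {l, r})" using Q by (auto simp: XP_def)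
    obtain B where B: "B \<in> Q" "r \<in> B" using pQ by (auto simp: partition_on_def)
    define Q' where "Q' = Q - {B}"
    have QB: "Q = insert B Q'" using B by (auto simp: Q'_def)
    have dis: "disjnt B (\<Union>Q')"
      using pQ B unfolding Q'_def partition_on_def disjoint_def disjnt_def by blast
    have pQ': "partition_on ((L \<union> insert r R) - B) Q'"
      using pQ dis QB partition_on_insert by metis
    have nr: "\<forall>C\<in>Q'. r \<notin> C" using dis B by (auto simp: disjnt_def)
    from bQ B consider "B = {r}" | l where "l \<in> L" "B = {l, r}"
      using r by fastforce
    then show "Q \<in> insert {r} ` XP L R \<union> (\<Union>l\<in>L. insert {l, r} ` XP (L - {l}) R)"
    proof cases
      case 1
      have "Q' \<in> XP L R"
        unfolding XP_def
      proof (intro CollectI conjI ballI)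
        show "partition_on (L \<union> R) Q'" using pQ' 1 r by (metis Un_insert_right insert_Diff1 insert_absorb
              Diff_insert_absorb Un_iff singletonI)
        fix C assume C: "C \<in> Q'"
        then have "C \<in> Q" by (simp add: Q'_def)
        then show "(\<exists>x. C = {x}) \<or> (\<exists>l\<in>L. \<exists>r\<in>R. C = {l, r})" using bQ nr C by fastforce
      qed
      then show ?thesis using QB 1 by blast
    next
      case (2 l)
      have "Q' \<in> XP (L - {l}) R"
        unfolding XP_def
      proof (intro CollectI conjI ballI)
        have "(L \<union> insert r R) - B = (L - {l}) \<union> R" using 2 r LR by auto
        then show "partition_on ((L - {l}) \<union> R) Q'" using pQ' by simp
        fix C assume C: "C \<in> Q'"
        then have "C \<in> Q" by (simp add: Q'_def)
        moreover have "l \<notin> C" using dis C 2 by (auto simp: disjnt_def)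
        ultimately show "(\<exists>x. C = {x}) \<or> (\<exists>l\<in>L - {l}. \<exists>r\<in>R. C = {l, r})" using bQ nr C by fastforce
      qed
      then show ?thesis using QB 2 by blast
    qed
  qed
next
  show "insert {r} ` XP L R \<union> (\<Union>l\<in>L. insert {l, r} ` XP (L - {l}) R) \<subseteq> XP L (insert r R)"
  proof (intro Un_least UN_least subsetI)
    fix Q assume "Q \<in> insert {r} ` XP L R"
    then obtain P where P: "P \<in> XP L R" "Q = insert {r} P" by auto
    have U: "\<Union>P = L \<union> R" using P by (simp add: XP_Union)
    have d: "disjnt {r} (\<Union>P)" using U r by (auto simp: disjnt_def)
    have e: "(L \<union> insert r R) - {r} = L \<union> R" using r by auto
    have "partition_on (L \<union> insert r R) Q"
      using partition_on_insert[OF d] P e by (auto simp: XP_def)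
    then show "Q \<in> XP L (insert r R)" using P by (auto simp: XP_def)
  next
    fix l Q assume l: "l \<in> L" and "Q \<in> insert {l, r} ` XP (L - {l}) R"
    then obtain P where P: "P \<in> XP (L - {l}) R" "Q = insert {l, r} P" by auto
    have U: "\<Union>P = (L - {l}) \<union> R" using P by (simp add: XP_Union)
    have d: "disjnt {l, r} (\<Union>P)" using U r l LR by (auto simp: disjnt_def)
    have e: "(L \<union> insert r R) - {l, r} = (L - {l}) \<union> R" using r l LR by auto
    have "partition_on (L \<union> insert r R) Q"
      using partition_on_insert[OF d] P e l by (auto simp: XP_def)
    then show "Q \<in> XP L (insert r R)" using P l by (auto simp: XP_def)
  qed
qed

lemma inj_insert_notin: "(\<And>P. P \<in> S \<Longrightarrow> B \<notin> P) \<Longrightarrow> inj_on (insert B) S"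
  unfolding inj_on_def by (metis Diff_insert_absorb)

lemma card_XP: "finite R \<Longrightarrow> finite L \<Longrightarrow> L \<inter> R = {} \<Longrightarrow> card (XP L R) = g (card L) (card R)"
proof (induction R arbitrary: L rule: finite_induct)
  case empty
  then show ?case by (simp add: XP_empty g_def)
next
  case (insert r R)
  have r: "r \<notin> L" "r \<notin> R" using insert by auto
  define A0 where "A0 = insert {r} ` XP L R"
  define A where "A = (\<lambda>l. insert {l, r} ` XP (L - {l}) R)"
  have fA: "finite (A l)" for l
    unfolding A_def using XP_finite[of "L - {l}" R] insert by auto
  have fA0: "finite A0" unfolding A0_def using XP_finite[of L R] insert by auto
  have cA0: "card A0 = g (card L) (card R)"
  proof -
    have "inj_on (insert {r}) (XP L R)"
    proof (rule inj_insert_notin)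
      fix P assume "P \<in> XP L R"
      then have "\<Union>P = L \<union> R" by (rule XP_Union)
      then show "{r} \<notin> P" using r by blast
    qed
    then have "card A0 = card (XP L R)" unfolding A0_def by (rule card_image)
    also have "\<dots> = g (card L) (card R)"
      by (rule insert.IH) (use insert.prems in auto)
    finally show ?thesis .
  qed
  have cA: "card (A l) = g (card L - 1) (card R)" if l: "l \<in> L" for l
  proof -
    have "inj_on (insert {l, r}) (XP (L - {l}) R)"
    proof (rule inj_insert_notin)
      fix P assume "P \<in> XP (L - {l}) R"
      then have "\<Union>P = (L - {l}) \<union> R" by (rule XP_Union)
      then show "{l, r} \<notin> P" using r by blast
    qed
    then have "card (A l) = card (XP (L - {l}) R)" unfolding A_def by (rule card_image)
    also have "\<dots> = g (card (L - {l})) (card R)"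
      by (rule insert.IH) (use insert.prems in auto)
    also have "card (L - {l}) = card L - 1" using l insert.prems by simp
    finally show ?thesis .
  qed
  have disj1: "A0 \<inter> (\<Union>l\<in>L. A l) = {}"
  proof -
    { fix l P P' assume l: "l \<in> L" and P: "P \<in> XP L R" and P': "P' \<in> XP (L - {l}) R"
        and eq: "insert {r} P = insert {l, r} P'"
      have "{r} \<in> insert {l, r} P'" using eq by blast
      moreover have "{r} \<noteq> {l, r}" using l r by auto
      moreover have "{r} \<notin> P'" using XP_Union[OF P'] r by blast
      ultimately have False by simp }
    then show ?thesis unfolding A0_def A_def by blast
  qed
  have disj2: "\<forall>l\<in>L. \<forall>l'\<in>L. l \<noteq> l' \<longrightarrow> A l \<inter> A l' = {}"
  proof (intro ballI impI)
    fix l l' assume l: "l \<in> L" "l' \<in> L" "l \<noteq> l'"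
    { fix P P' assume P: "P \<in> XP (L - {l}) R" and P': "P' \<in> XP (L - {l'}) R"
        and eq: "insert {l, r} P = insert {l', r} P'"
      have "{l, r} \<in> insert {l', r} P'" using eq by blast
      moreover have "{l, r} \<noteq> {l', r}" using l r by (auto simp: doubleton_eq_iff)
      moreover have "{l, r} \<notin> P'" using XP_Union[OF P'] r by blast
      ultimately have False by simp }
    then show "A l \<inter> A l' = {}" unfolding A_def by blast
  qed
  have "XP L (insert r R) = A0 \<union> (\<Union>l\<in>L. A l)"
    proof -
    have LR: "L \<inter> R = {}" using insert.prems by auto
    show ?thesis unfolding A0_def A_def by (rule XP_insert[OF r LR])
  qed
  then have "card (XP L (insert r R)) = card A0 + card (\<Union>l\<in>L. A l)"
    using card_Un_disjoint[OF fA0 _ disj1] fA insert by auto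
  also have "card (\<Union>l\<in>L. A l) = (\<Sum>l\<in>L. card (A l))"
    using card_UN_disjoint[of L A] fA disj2 insert by auto
  also have "\<dots> = card L * g (card L - 1) (card R)" using cA by simp
  finally show ?case using cA0 g_rec insert by simp
qed


definition col :: "nat \<Rightarrow> nat \<Rightarrow> nat \<Rightarrow> nat" where
  "col n m = (\<lambda>i. if i \<in> {1..n} then (if i \<le> m then 2 else 1) else undefined)"

lemma col_inj: "m \<le> n \<Longrightarrow> m' \<le> n \<Longrightarrow> m \<noteq> m' \<Longrightarrow> col n m \<noteq> col n m'"
proof
  assume a: "m \<le> n" "m' \<le> n" "m \<noteq> m'" and e: "col n m = col n m'"
  show False
  proof (cases "m < m'")
    case True
    then have "col n m m' \<noteq> col n m' m'" using a by (simp add: col_def)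
    then show False using e by simp
  next
    case False
    then have "col n m m \<noteq> col n m' m" using a by (simp add: col_def)
    then show False using e by simp
  qed
qed

lemma valid_sub:
  assumes s: "(P, c) \<in> colored_partitions n" and n1: "\<not> contains_1111 n (P, c)"
    and n2: "\<not> contains_1112 n (P, c)" and n3: "\<not> contains_1122 n (P, c)"
  shows "\<exists>m\<le>n. c = col n m \<and> P \<in> XP {1..m} {Suc m..n}"
proof -
  have pP: "partition_on {1..n} P" and cE: "c \<in> {1..n} \<rightarrow>\<^sub>E {1, 2}"
    using s by (auto simp: colored_partitions_def)
  have c12: "c i = 1 \<or> c i = 2" if "i \<in> {1..n}" for i using cE that by auto
  have cU: "c i = undefined" if "i \<notin> {1..n}" for i using cE that by auto
  have K: "\<not> (c i = 1 \<and> c j = 2)" if "i \<in> {1..n}" "j \<in> {1..n}" "i < j" for i j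
    using n2 n3 that unfolding contains_1112_def contains_1122_def by blast
  have D: "c i \<noteq> c j" if "i \<in> {1..n}" "j \<in> {1..n}" "i \<noteq> j" "same_block P i j" for i j
    using n1 that unfolding contains_1111_def by blast
  define T where "T = {i \<in> {1..n}. c i = 2}"
  define m where "m = Max (insert 0 T)"
  have fT: "finite (insert 0 T)" unfolding T_def by auto
  have mn: "m \<le> n" unfolding m_def using fT by (subst Max_le_iff) (auto simp: T_def)
  have mT: "m = 0 \<or> m \<in> T" unfolding m_def using Max_in[OF fT] by auto
  have geT: "i \<le> m" if "i \<in> T" for i unfolding m_def using fT that by auto
  have ccol: "c = col n m"
  proof
    fix i show "c i = col n m i"
    proof (cases "i \<in> {1..n}")
      case False then show ?thesis using cU[OF False] unfolding col_def using False by (simp only: if_False)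
    next
      case True
      show ?thesis
      proof (cases "i \<le> m")
        case True
        with \<open>i \<in> {1..n}\<close> have "m \<in> T" using mT by auto
        then have "c m = 2" "m \<in> {1..n}" by (auto simp: T_def)
        moreover have "c i \<noteq> 1"
        proof
          assume "c i = 1"
          then have "i \<noteq> m" using \<open>c m = 2\<close> by auto
          then show False using K[of i m] True \<open>i \<in> {1..n}\<close> \<open>c i = 1\<close> calculation by auto
        qed
        ultimately show ?thesis using c12[of i] True \<open>i \<in> {1..n}\<close> by (auto simp: col_def)
      next
        case False
        then have "i \<notin> T" using geT by auto
        then show ?thesis using c12[of i] False \<open>i \<in> {1..n}\<close> by (auto simp: col_def T_def)
      qed
    qed
  qed
  have U: "{1..m} \<union> {Suc m..n} = {1..n}" using mn by auto
  have "P \<in> XP {1..m} {Suc m..n}"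
    unfolding XP_def
  proof (intro CollectI conjI ballI)
    show "partition_on ({1..m} \<union> {Suc m..n}) P" using pP U by simp
    fix B assume B: "B \<in> P"
    have Bsub: "B \<subseteq> {1..n}" using pP B by (auto simp: partition_on_def)
    have sb: "same_block P i j" if "i \<in> B" "j \<in> B" for i j
      using B that by (auto simp: same_block_def)
    have "B \<noteq> {}" using pP B by (auto simp: partition_on_def)
    then obtain x where x: "x \<in> B" by blast
    show "(\<exists>x. B = {x}) \<or> (\<exists>l\<in>{1..m}. \<exists>r\<in>{Suc m..n}. B = {l, r})"
    proof (cases "B = {x}")
      case True then show ?thesis by blast
    next
      case False
      then obtain y where y: "y \<in> B" "y \<noteq> x" using x by blast
      have "x \<in> {1..n}" "y \<in> {1..n}" using x y Bsub by auto
      then have cxy: "c x \<noteq> c y" using D[of x y] sb[OF x y(1)] y(2) by auto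
      have B2: "B = {x, y}"
      proof
        show "B \<subseteq> {x, y}"
        proof
          fix z assume z: "z \<in> B"
          show "z \<in> {x, y}"
          proof (rule ccontr)
            assume "z \<notin> {x, y}"
            then have "c z \<noteq> c x" "c z \<noteq> c y" using D sb z x y Bsub by (metis insertCI subsetD)+
            moreover have "z \<in> {1..n}" using z Bsub by auto
            ultimately show False using cxy c12[OF \<open>x \<in> {1..n}\<close>] c12[OF \<open>y \<in> {1..n}\<close>] c12[of z] by auto
          qed
        qed
        show "{x, y} \<subseteq> B" using x y by auto
      qed
      define i where "i = min x y"
      define j where "j = max x y"
      have ij: "B = {i, j}" "i < j" using B2 y(2) by (auto simp: i_def j_def min_def max_def)
      have iB: "i \<in> {1..n}" "j \<in> {1..n}" using ij Bsub by auto
      have "c i \<noteq> c j" using cxy by (auto simp: i_def j_def min_def max_def)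
      then have "c i = 2" "c j = 1" using K[OF iB ij(2)] c12[OF iB(1)] c12[OF iB(2)] by auto
      then have ci: "col n m i = 2" and cj: "col n m j = 1" using ccol by simp_all
      have "i \<le> m"
      proof (rule ccontr)
        assume "\<not> i \<le> m"
        then have "col n m i = 1" using iB(1) unfolding col_def by simp
        with ci show False by simp
      qed
      moreover have "\<not> j \<le> m"
      proof
        assume "j \<le> m"
        then have "col n m j = 2" using iB(2) unfolding col_def by simp
        with cj show False by simp
      qed
      ultimately have "i \<le> m" "\<not> j \<le> m" by blast+
      then have "i \<in> {1..m}" "j \<in> {Suc m..n}" using iB by auto
      then show ?thesis using ij(1) by blast
    qed
  qed
  then show ?thesis using ccol mn by blast
qed

lemma valid_sup:
  assumes m: "m \<le> n" and P: "P \<in> XP {1..m} {Suc m..n}"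
  shows "(P, col n m) \<in> colored_partitions n \<and> \<not> contains_1111 n (P, col n m)
     \<and> \<not> contains_1112 n (P, col n m) \<and> \<not> contains_1122 n (P, col n m)"
proof -
  have U: "{1..m} \<union> {Suc m..n} = {1..n}" using m by auto
  have pP: "partition_on {1..n} P" using P U by (auto simp: XP_def)
  have bP: "\<forall>B\<in>P. (\<exists>x. B = {x}) \<or> (\<exists>l\<in>{1..m}. \<exists>r\<in>{Suc m..n}. B = {l, r})"
    using P by (auto simp: XP_def)
  have "col n m \<in> {1..n} \<rightarrow>\<^sub>E {1, 2}" by (auto simp: col_def split: if_splits)
  then have 0: "(P, col n m) \<in> colored_partitions n" using pP by (simp add: colored_partitions_def)
  have 1: "\<not> contains_1111 n (P, col n m)"
  proof
    assume "contains_1111 n (P, col n m)"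
    then obtain i j B where ij: "i \<in> {1..n}" "j \<in> {1..n}" "i \<noteq> j" "B \<in> P" "i \<in> B" "j \<in> B"
      "col n m i = col n m j"
      unfolding contains_1111_def same_block_def by auto
    from bP ij(4) consider x where "B = {x}" | l r where "l \<in> {1..m}" "r \<in> {Suc m..n}" "B = {l, r}"
      by blast
    then show False
    proof cases
      case 1 then show False using ij by auto
    next
      case 2 then show False using ij by (auto simp: col_def)
    qed
  qed
  have 2: "\<not> contains_1112 n (P, col n m)"
    unfolding contains_1112_def by (auto simp: col_def split: if_splits)
  have 3: "\<not> contains_1122 n (P, col n m)"
    unfolding contains_1122_def by (auto simp: col_def split: if_splits)
  show ?thesis using 0 1 2 3 by blast
qed

lemma valid_eq:
  "{\<sigma> \<in> colored_partitions n.
            \<not> contains_1111 n \<sigma> \<and> \<not> contains_1112 n \<sigma> \<and> \<not> contains_1122 n \<sigma>}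
   = (\<Union>m\<in>{..n}. (\<lambda>P. (P, col n m)) ` XP {1..m} {Suc m..n})"
proof
  show "{\<sigma> \<in> colored_partitions n.
            \<not> contains_1111 n \<sigma> \<and> \<not> contains_1112 n \<sigma> \<and> \<not> contains_1122 n \<sigma>}
        \<subseteq> (\<Union>m\<in>{..n}. (\<lambda>P. (P, col n m)) ` XP {1..m} {Suc m..n})"
  proof
    fix \<sigma> assume a: "\<sigma> \<in> {\<sigma> \<in> colored_partitions n.
            \<not> contains_1111 n \<sigma> \<and> \<not> contains_1112 n \<sigma> \<and> \<not> contains_1122 n \<sigma>}"
    obtain P c where pc: "\<sigma> = (P, c)" by (cases \<sigma>)
    then obtain m where "m \<le> n" "c = col n m" "P \<in> XP {1..m} {Suc m..n}"
      using valid_sub[of P c n] a by auto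
    then show "\<sigma> \<in> (\<Union>m\<in>{..n}. (\<lambda>P. (P, col n m)) ` XP {1..m} {Suc m..n})"
      using pc by auto
  qed
  show "(\<Union>m\<in>{..n}. (\<lambda>P. (P, col n m)) ` XP {1..m} {Suc m..n})
     \<subseteq> {\<sigma> \<in> colored_partitions n.
            \<not> contains_1111 n \<sigma> \<and> \<not> contains_1112 n \<sigma> \<and> \<not> contains_1122 n \<sigma>}"
    using valid_sup by auto
qed

theorem mainTheorem14:
  fixes n :: nat
  assumes "n \<ge> 1"
  shows "card {\<sigma> \<in> colored_partitions n.
            \<not> contains_1111 n \<sigma> \<and> \<not> contains_1112 n \<sigma> \<and> \<not> contains_1122 n \<sigma>}
         = (\<Sum>k = 0..n. (n choose k) * fact (k div 2))"
proof -
  define A where "A = (\<lambda>m. (\<lambda>P. (P, col n m)) ` XP {1..m} {Suc m..n})"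
  have fA: "finite (A m)" for m unfolding A_def by (intro finite_imageI XP_finite) auto
  have cA: "card (A m) = g m (n - m)" for m
  proof -
    have "card (A m) = card (XP {1..m} {Suc m..n})"
      unfolding A_def by (rule card_image) (auto simp: inj_on_def)
    also have "\<dots> = g (card {1..m}) (card {Suc m..n})" by (rule card_XP) auto
    finally show ?thesis by simp
  qed
  have dA: "\<forall>m\<in>{..n}. \<forall>m'\<in>{..n}. m \<noteq> m' \<longrightarrow> A m \<inter> A m' = {}"
    unfolding A_def using col_inj by fastforce
  have "card {\<sigma> \<in> colored_partitions n.
            \<not> contains_1111 n \<sigma> \<and> \<not> contains_1112 n \<sigma> \<and> \<not> contains_1122 n \<sigma>}
        = card (\<Union>m\<in>{..n}. A m)" unfolding valid_eq A_def ..
  also have "\<dots> = (\<Sum>m\<le>n. card (A m))" by (rule card_UN_disjoint) (use fA dA in auto)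
  also have "\<dots> = (\<Sum>m\<le>n. g m (n - m))" using cA by simp
  also have "\<dots> = (\<Sum>k = 0..n. (n choose k) * fact (k div 2))" by (rule numeric)
  finally show ?thesis .
qed

end
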